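(* Let $(\mu,\sigma)\in\mathsf{UM}\rtimes\mathsf{US}$, written $\mu=1+\mu_{+}$ with $\mu_{+}\in\mathbb{K}[[\mathtt{x}]]^{+}$ and $\sigma=\mathtt{x}+\sigma_{+}$ with $\sigma_{+}\in\mathfrak{M}^{+}$, and let $\lambda\in\mathbb{K}$. Then the series $$(\mu,\sigma)^{\rtimes\lambda}:=\sum_{n\ge0}\binom{\lambda}{n}(\mu_{+},\sigma_{+})^{\rtimes n}$$ converges in $\mathbb{K}[[\mathtt{x}]]\times\mathfrak{M}$ and its sum belongs to $\mathsf{UM}\rtimes\mathsf{US}$.
   Context: $\mathbb{K}$ is a field of characteristic zero (discrete topology); $\mathbb{K}[[\mathtt{x}]]$ has the $(\mathtt{x})$-adic topology given by the order valuation $\nu$ ($\nu(0)=+\infty$). $\mathfrak{M}:=\mathtt{x}\mathbb{K}[[\mathtt{x}]]$; $\mathbb{K}[[\mathtt{x}]]\times\mathfrak{M}$ has the product topology and componentwise vector space structure. $\mathbb{K}[[\mathtt{x}]]^{+}:=\mathfrak{M}$, $\mathfrak{M}^{+}:=\{\sigma\in\mathfrak{M}:\nu(\sigma)>1\}$. For $h=\sum h_n\mathtt{x}^n$ and $\tau\in\mathfrak{M}$, $h\circ\tau:=\sum h_n\tau^n$. Product: $(\mu_1,\sigma_1)\rtimes(\mu_2,\sigma_2):=((\mu_1\circ\sigma_2)\mu_2,\sigma_1\circ\sigma_2)$; $(\mu,\sigma)^{\rtimes0}:=(1,\mathtt{x})$, $(\mu,\sigma)^{\rtimes n}$ the $n$-fold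 product. $\mathsf{UM}:=\{1+\mu_{+}:\mu_{+}\in\mathbb{K}[[\mathtt{x}]]^{+}\}$, $\mathsf{US}:=\{\mathtt{x}+\sigma_{+}:\sigma_{+}\in\mathfrak{M}^{+}\}$, and $\mathsf{UM}\rtimes\mathsf{US}$ (the Riordan group) is the set of pairs $(\mu,\sigma)$ with $\mu\in\mathsf{UM}$, $\sigma\in\mathsf{US}$. Generalized binomial coefficients: $\binom{\lambda}{n}:=\frac{\lambda(\lambda-1)\cdots(\lambda-n+1)}{n!}$, $\binom{\lambda}{0}=1$. *)

theory Defs
  imports "HOL-Computational_Algebra.Formal_Power_Series" "HOL-Library.Product_Plus"
begin

definition riordan_prod :: "'a::field fps \<times> 'a fps \<Rightarrow> 'a fps \<times> 'a fps \<Rightarrow> 'a fps \<times> 'a fps"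
  where "riordan_prod p q = ((fst p oo snd q) * fst q, snd p oo snd q)"

primrec riordan_pow :: "'a::field fps \<times> 'a fps \<Rightarrow> nat \<Rightarrow> 'a fps \<times> 'a fps" where
  "riordan_pow p 0 = (1, fps_X)"
| "riordan_pow p (Suc n) = riordan_prod (riordan_pow p n) p"

definition riordan_group :: "('a::field fps \<times> 'a fps) set"
  where "riordan_group = {(mu, sigma). fps_nth mu 0 = 1 \<and> fps_nth sigma 0 = 0 \<and> fps_nth sigma 1 = 1}"

definition pair_scale :: "'a::field \<Rightarrow> 'a fps \<times> 'a fps \<Rightarrow> 'a fps \<times> 'a fps"
  where "pair_scale c p = (fps_const c * fst p, fps_const c * snd p)"

end

theory Submission
  imports Defs
begin

unbundle fps_syntax

lemma fps_lim_coeffwise: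
  fixes f :: "nat \<Rightarrow> 'a::group_add fps"
  assumes "\<And>k N. k < N \<Longrightarrow> f N $ k = a $ k"
  shows "f \<longlonglongrightarrow> a"
  unfolding lim_sequentially
proof (intro allI impI)
  fix r :: real assume "r > 0"
  obtain i where i: "(1/2::real)^i < r"
    using reals_power_lt_ex[OF \<open>r > 0\<close>, of 2] by auto
  have "dist (f N) a < r" if "N \<ge> Suc i" for N
  proof -
    have "dist (f N) a < inverse (2 ^ i)"
      by (rule nth_equal_imp_dist_less) (use assms that in auto)
    also have "\<dots> = (1/2)^i" by (simp add: power_divide inverse_eq_divide)
    finally show ?thesis using i by simp
  qed
  then show "\<exists>no. \<forall>n\<ge>no. dist (f n) a < r" by blast
qed

lemma pow_vanish:
  fixes s :: "'a::field fps"
  assumes "s $ 0 = 0" "s $ 1 = 0"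
  shows "k < 2 * i \<Longrightarrow> (s ^ i) $ k = 0"
proof (induction i arbitrary: k)
  case 0 then show ?case by simp
next
  case (Suc i)
  have "(s ^ Suc i) $ k = (\<Sum>j=0..k. s $ j * (s ^ i) $ (k - j))"
    by (simp add: fps_mult_nth)
  also have "\<dots> = 0"
  proof (rule sum.neutral, intro ballI)
    fix j assume "j \<in> {0..k}"
    show "s $ j * (s ^ i) $ (k - j) = 0"
    proof (cases "j \<le> 1")
      case True then have "j = 0 \<or> j = 1" by auto
      then show ?thesis using assms by auto
    next
      case False
      then have "k - j < 2 * i" using Suc.prems \<open>j \<in> {0..k}\<close> by auto
      then show ?thesis using Suc.IH by simp
    qed
  qed
  finally show ?case .
qed

lemma snd_zero0:
  fixes m s :: "'a::field fps"
  assumes "s $ 0 = 0"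
  shows "snd (riordan_pow (m, s) n) $ 0 = 0"
  using assms by (induction n) (auto simp: riordan_prod_def)

lemma snd_vanish:
  fixes m s :: "'a::field fps"
  assumes "s $ 0 = 0" "s $ 1 = 0"
  shows "k < n \<Longrightarrow> snd (riordan_pow (m, s) n) $ k = 0"
proof (induction n arbitrary: k)
  case 0 then show ?case by simp
next
  case (Suc n)
  let ?f = "snd (riordan_pow (m, s) n)"
  have "snd (riordan_pow (m, s) (Suc n)) $ k = (?f oo s) $ k"
    by (simp add: riordan_prod_def)
  also have "\<dots> = (\<Sum>i=0..k. ?f $ i * (s ^ i) $ k)" by (simp add: fps_compose_nth)
  also have "\<dots> = 0"
  proof (rule sum.neutral, intro ballI)
    fix i assume "i \<in> {0..k}"
    show "?f $ i * (s ^ i) $ k = 0"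
    proof (cases "i < n")
      case True then show ?thesis using Suc.IH by simp
    next
      case False
      show ?thesis
      proof (cases "i = 0")
        case True then show ?thesis using snd_zero0[OF assms(1)] by simp
      next
        case False
        then have "k < 2 * i" using \<open>\<not> i < n\<close> Suc.prems by auto
        then show ?thesis using pow_vanish[OF assms] by simp
      qed
    qed
  qed
  finally show ?case .
qed

lemma fst_vanish:
  fixes m s :: "'a::field fps"
  assumes "m $ 0 = 0"
  shows "k < n \<Longrightarrow> fst (riordan_pow (m, s) n) $ k = 0"
proof (induction n arbitrary: k)
  case 0 then show ?case by simp
next
  case (Suc n)
  let ?f = "fst (riordan_pow (m, s) n)"
  have c: "(?f oo s) $ i = 0" if "i < n" for i
  proof -
    have "(?f oo s) $ i = (\<Sum>j=0..i. ?f $ j * (s ^ j) $ i)" by (simp add: fps_compose_nth)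
    also have "\<dots> = 0" using that Suc.IH by (intro sum.neutral) auto
    finally show ?thesis .
  qed
  have "fst (riordan_pow (m, s) (Suc n)) $ k = ((?f oo s) * m) $ k"
    by (simp add: riordan_prod_def)
  also have "\<dots> = (\<Sum>i=0..k. (?f oo s) $ i * m $ (k - i))" by (simp add: fps_mult_nth)
  also have "\<dots> = 0"
  proof (rule sum.neutral, intro ballI)
    fix i assume "i \<in> {0..k}"
    show "(?f oo s) $ i * m $ (k - i) = 0"
    proof (cases "i < n")
      case True then show ?thesis using c by simp
    next
      case False then have "k - i = 0" using Suc.prems by auto
      then show ?thesis using assms by simp
    qed
  qed
  finally show ?case .
qed

lemma partial_coeff:
  fixes F :: "nat \<Rightarrow> 'a::field fps" and c :: "nat \<Rightarrow> 'a"
  assumes "\<And>n k. k < n \<Longrightarrow> F n $ k = 0" "k < N"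
  shows "(\<Sum>n<N. fps_const (c n) * F n) $ k = (\<Sum>n\<le>k. c n * F n $ k)"
proof -
  have "(\<Sum>n<N. fps_const (c n) * F n) $ k = (\<Sum>n<N. c n * F n $ k)"
    by (simp add: fps_sum_nth)
  also have "\<dots> = (\<Sum>n\<le>k. c n * F n $ k)"
    by (rule sum.mono_neutral_right) (use assms in auto)
  finally show ?thesis .
qed

theorem mainTheorem13:
  fixes mu sigma :: "'a::field_char_0 fps" and lam :: 'a
  assumes "(mu, sigma) \<in> riordan_group"
  shows "\<exists>S. (\<lambda>N. \<Sum>n<N. pair_scale (lam gchoose n) (riordan_pow (mu - 1, sigma - fps_X) n))
              \<longlonglongrightarrow> S
          \<and> S \<in> riordan_group"
proof -
  let ?m = "mu - 1" and ?s = "sigma - fps_X"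
  let ?P = "riordan_pow (?m, ?s)"
  let ?c = "\<lambda>n. lam gchoose n"
  have m0: "?m $ 0 = 0" and s0: "?s $ 0 = 0" and s1: "?s $ 1 = 0"
    using assms by (auto simp: riordan_group_def)
  define S1 where "S1 = Abs_fps (\<lambda>k. \<Sum>n\<le>k. ?c n * fst (?P n) $ k)"
  define S2 where "S2 = Abs_fps (\<lambda>k. \<Sum>n\<le>k. ?c n * snd (?P n) $ k)"
  have fsum: "fst (\<Sum>n<N. pair_scale (?c n) (?P n)) = (\<Sum>n<N. fps_const (?c n) * fst (?P n))" for N
    by (simp add: fst_sum pair_scale_def)
  have ssum: "snd (\<Sum>n<N. pair_scale (?c n) (?P n)) = (\<Sum>n<N. fps_const (?c n) * snd (?P n))" for N
    by (simp add: snd_sum pair_scale_def)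
  have l1: "(\<lambda>N. fst (\<Sum>n<N. pair_scale (?c n) (?P n))) \<longlonglongrightarrow> S1"
    unfolding fsum
    by (rule fps_lim_coeffwise) (simp add: S1_def partial_coeff fst_vanish[OF m0])
  have l2: "(\<lambda>N. snd (\<Sum>n<N. pair_scale (?c n) (?P n))) \<longlonglongrightarrow> S2"
    unfolding ssum
    by (rule fps_lim_coeffwise) (simp add: S2_def partial_coeff snd_vanish[OF s0 s1])
  have "(\<lambda>N. (fst (\<Sum>n<N. pair_scale (?c n) (?P n)), snd (\<Sum>n<N. pair_scale (?c n) (?P n)))) \<longlonglongrightarrow> (S1, S2)"
    by (rule tendsto_Pair[OF l1 l2])
  then have lim: "(\<lambda>N. \<Sum>n<N. pair_scale (?c n) (?P n)) \<longlonglongrightarrow> (S1, S2)" by simp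
  have "S1 $ 0 = 1" by (simp add: S1_def)
  moreover have "S2 $ 0 = 0" by (simp add: S2_def)
  moreover have "S2 $ 1 = 1"
    using s1 by (simp add: S2_def riordan_prod_def fps_X_fps_compose)
  ultimately have "(S1, S2) \<in> riordan_group" by (simp add: riordan_group_def)
  with lim show ?thesis by blast
qed

end
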